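(* Let $H\in\mathbb{R}^{n\times d}$ have rank $h$, $\Sigma\in\mathbb{R}^{n\times n}$ symmetric positive definite, $\Gamma_0$ the empirical covariance of an initial ensemble, $C_0=H\Gamma_0H^\top$ and $C_{i+1}=\Sigma-\Sigma(C_i+\Sigma)^{-1}\Sigma$. Consider the generalized eigenvalue problem $C_i\tilde w=\tilde\delta\Sigma\tilde w$, whose eigenvectors do not depend on $i$, with eigenvalue $\tilde\delta_{\ell,i}$ along eigenvector $\tilde w_\ell$. Then $\tilde\delta_{\ell,0}=0$ implies $\tilde\delta_{\ell,i}=0$ for all $i\ge1$, and $\tilde\delta_{\ell,0}>0$ implies $\tilde\delta_{\ell,i}>0$ for all $i\ge1$. Let $r$ be the number of positive eigenvalues. There is a $\Sigma$-orthogonal basis $\{\tilde w_1,\dots,\tilde w_n\}$ of $\mathbb{R}^n$ of eigenvectors such that: (1) $\tilde w_1,\dots,\tilde w_r\in\mathsf{Ran}(\Sigma^{-1}H)$ have positive eigenvalues, labeled with $\tilde\delta_{1,1}\ge\dots\ge\tilde\delta_{r,1}>0$, and this ordering is preserved for all $i\ge1$; (2) if $r<h$, $\tilde w_{r+1},\dots,\tilde w_h\in\mathsf{Ran}(\Sigma^{-1}H)$ have eigenvalue zero; (3) if $h<n$, $\tilde w_{h+1},\dots,\tilde w_n\in\mathsf{Ker}(H^\top)$ have eigenvalue zero.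
   Context: Empirical covariance of $v_0^{(1)},\dots,v_0^{(J)}$: $\Gamma_0=\frac1{J-1}\sum_j(v_0^{(j)}-\bar v_0)(v_0^{(j)}-\bar v_0)^\top$, $\bar v_0=\frac1J\sum_jv_0^{(j)}$. $\Sigma$-orthogonal means $\tilde w_k^\top\Sigma\tilde w_l=0$ for $k\ne l$. *)

theory Defs
  imports "HOL-Analysis.Analysis"
begin

definition outer_prod :: "real^'m \<Rightarrow> real^'n \<Rightarrow> real^'n^'m" where
  "outer_prod x y = (\<chi> a b. x $ a * y $ b)"

definition ens_mean :: "nat \<Rightarrow> (nat \<Rightarrow> real^'d) \<Rightarrow> real^'d" where
  "ens_mean J v = (1 / real J) *\<^sub>R (\<Sum>j\<in>{1..J}. v j)"

definition emp_cov :: "nat \<Rightarrow> (nat \<Rightarrow> real^'d) \<Rightarrow> real^'d^'d" where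
  "emp_cov J v = (1 / (real J - 1)) *\<^sub>R
     (\<Sum>j\<in>{1..J}. outer_prod (v j - ens_mean J v) (v j - ens_mean J v))"

definition spd :: "real^'n^'n \<Rightarrow> bool" where
  "spd S \<longleftrightarrow> transpose S = S \<and> (\<forall>x. x \<noteq> 0 \<longrightarrow> 0 < x \<bullet> (S *v x))"

end

theory Submission
  imports Defs
begin


lemma matrix_inv_props:
  fixes A :: "real^'n^'n"
  assumes "invertible A"
  shows "A ** matrix_inv A = mat 1" "matrix_inv A ** A = mat 1"
proof -
  have "\<exists>A'. A ** A' = mat 1 \<and> A' ** A = mat 1" using assms by (simp add: invertible_def)
  from someI_ex[OF this] show "A ** matrix_inv A = mat 1" "matrix_inv A ** A = mat 1"
    by (simp_all add: matrix_inv_def)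
qed

lemma inv_apply:
  fixes A :: "real^'n^'n"
  assumes "invertible A"
  shows "A *v (matrix_inv A *v x) = x" "matrix_inv A *v (A *v x) = x"
  using matrix_inv_props[OF assms] by (simp_all add: matrix_vector_mul_assoc)

lemma sym_inner:
  fixes M :: "real^'n^'n"
  assumes "transpose M = M"
  shows "x \<bullet> (M *v y) = y \<bullet> (M *v x)"
proof -
  have "x \<bullet> (M *v y) = (x v* M) \<bullet> y" by (simp add: dot_lmul_matrix)
  also have "x v* M = transpose M *v x" by simp
  finally show ?thesis using assms by (simp add: inner_commute)
qed

lemma quad_expand:
  fixes M :: "real^'n^'n"
  assumes "transpose M = M"
  shows "(x + t *\<^sub>R z) \<bullet> (M *v (x + t *\<^sub>R z)) = x \<bullet> (M *v x) + 2*t*(x \<bullet> (M *v z)) + t^2 * (z \<bullet> (M *v z))"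
  using sym_inner[OF assms, of z x]
  by (simp add: matrix_vector_right_distrib matrix_vector_mult_scaleR inner_add_left inner_add_right power2_eq_square algebra_simps)

lemma spd_inj:
  fixes S :: "real^'n^'n"
  assumes "spd S" "S *v x = 0" shows "x = 0"
  using assms unfolding spd_def by force

lemma spd_invertible:
  fixes S :: "real^'n^'n"
  assumes "spd S" shows "invertible S"
proof -
  have "\<exists>B. B ** S = mat 1"
    using matrix_left_invertible_ker spd_inj[OF assms] by blast
  then show ?thesis using invertible_left_inverse by blast
qed

lemma orth_indep:
  fixes S :: "real^'n^'n" and W :: "(real^'n) set"
  assumes "spd S" "finite W" "0 \<notin> W" "\<And>a b. a \<in> W \<Longrightarrow> b \<in> W \<Longrightarrow> a \<noteq> b \<Longrightarrow> a \<bullet> (S *v b) = 0"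
  shows "independent W"
proof -
  have "u w = 0" if u: "(\<Sum>v\<in>W. u v *\<^sub>R v) = 0" and w: "w \<in> W" for u w
  proof -
    have "0 = (\<Sum>v\<in>W. u v *\<^sub>R v) \<bullet> (S *v w)" using u by simp
    also have "\<dots> = (\<Sum>v\<in>W. u v * (v \<bullet> (S *v w)))" by (simp add: inner_sum_left)
    also have "\<dots> = u w * (w \<bullet> (S *v w))"
      using assms(4) w assms(2) by (subst sum.remove[OF assms(2) w]) (auto intro!: sum.neutral)
    finally have "u w * (w \<bullet> (S *v w)) = 0" by simp
    moreover have "w \<noteq> 0" using assms(3) w by auto
    then have "0 < w \<bullet> (S *v w)" using assms(1) unfolding spd_def by blast
    ultimately show ?thesis by simp
  qed
  then show ?thesis using assms(2) by (auto simp: dependent_finite)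
qed

lemma spd_pos: "spd S \<Longrightarrow> x \<noteq> 0 \<Longrightarrow> 0 < x \<bullet> (S *v x)"
  unfolding spd_def by blast

lemma quad_scale:
  fixes M :: "real^'n^'n"
  shows "(c *\<^sub>R y) \<bullet> (M *v (c *\<^sub>R y)) = c^2 * (y \<bullet> (M *v y))"
  by (simp add: matrix_vector_mult_scaleR power2_eq_square)

lemma cont_quad:
  fixes M :: "real^'n^'n"
  shows "continuous_on K (\<lambda>y. y \<bullet> (M *v y))"
proof -
  have "continuous_on K ((*v) M)" by (rule matrix_vector_mult_linear_continuous_on)
  then show ?thesis by (intro continuous_intros)
qed

lemma rayleigh_eig:
  fixes C S :: "real^'n^'n"
  assumes symC: "transpose C = C" and psd: "\<And>x. 0 \<le> x \<bullet> (C *v x)" and spd: "spd S"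
    and U: "subspace U" and inv: "\<And>x. x \<in> U \<Longrightarrow> \<exists>y\<in>U. C *v x = S *v y"
    and x0: "x0 \<in> U" "x0 \<noteq> 0"
  shows "\<exists>x l. x \<in> U \<and> x \<noteq> 0 \<and> C *v x = l *\<^sub>R (S *v x) \<and> 0 \<le> l \<and>
              (\<forall>y\<in>U. y \<bullet> (C *v y) \<le> l * (y \<bullet> (S *v y)))"
proof -
  define K where "K = sphere (0::real^'n) 1 \<inter> U"
  define f where "f y = (y \<bullet> (C *v y)) / (y \<bullet> (S *v y))" for y
  have cK: "compact K" unfolding K_def
    by (intro compact_Int_closed compact_sphere closed_subspace U)
  have Kne: "K \<noteq> {}"
  proof -
    have "(1/norm x0) *\<^sub>R x0 \<in> K" using x0 U unfolding K_def by (auto simp: subspace_scale)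
    then show ?thesis by blast
  qed
  have pK: "0 < y \<bullet> (S *v y)" if "y \<in> K" for y
  proof -
    have "y \<noteq> 0" using that unfolding K_def by auto
    then show ?thesis using spd_pos[OF spd] by blast
  qed
  have "continuous_on K f" unfolding f_def
    by (intro continuous_on_divide cont_quad) (use pK in force)
  then obtain x where xK: "x \<in> K" and xmax: "\<And>y. y \<in> K \<Longrightarrow> f y \<le> f x"
    using continuous_attains_sup[OF cK Kne] by blast
  define l where "l = f x"
  have xU: "x \<in> U" and xnz: "x \<noteq> 0" using xK unfolding K_def by auto
  have px: "0 < x \<bullet> (S *v x)" using pK xK by auto
  have qx: "x \<bullet> (C *v x) = l * (x \<bullet> (S *v x))" using px unfolding l_def f_def by simp
  have l0: "0 \<le> l" unfolding l_def f_def using psd[of x] px by simp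
  have bound: "y \<bullet> (C *v y) \<le> l * (y \<bullet> (S *v y))" if yU: "y \<in> U" for y
  proof (cases "y = 0")
    case True then show ?thesis by simp
  next
    case False
    define c where "c = 1 / norm y"
    have c0: "c \<noteq> 0" using False by (simp add: c_def)
    have "c *\<^sub>R y \<in> K" using False yU U unfolding K_def c_def by (auto simp: subspace_scale)
    then have "f (c *\<^sub>R y) \<le> l" using xmax l_def by blast
    moreover have "f (c *\<^sub>R y) = f y" unfolding f_def quad_scale using c0 by simp
    moreover have "0 < y \<bullet> (S *v y)" using spd_pos[OF spd False] .
    ultimately show ?thesis unfolding f_def by (simp add: divide_le_eq mult.commute)
  qed
  have stat: "x \<bullet> (C *v z) = l * (x \<bullet> (S *v z))" if zU: "z \<in> U" for z
  proof -
    define a where "a = x \<bullet> (C *v z) - l * (x \<bullet> (S *v z))"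
    define b where "b = z \<bullet> (C *v z) - l * (z \<bullet> (S *v z))"
    have symS: "transpose S = S" using spd unfolding spd_def by blast
    have ineq: "2*t*a + t^2*b \<le> 0" for t
    proof -
      have "x + t *\<^sub>R z \<in> U" using U xU zU by (simp add: subspace_add subspace_scale)
      from bound[OF this] show ?thesis
        unfolding quad_expand[OF symC] quad_expand[OF symS] a_def b_def using qx
        by (simp add: algebra_simps)
    qed
    define t where "t = a / (\<bar>b\<bar> + 1)"
    have "2*t*a + t^2*b \<le> 0" by (rule ineq)
    then have "(2*t*a + t^2*b) * (\<bar>b\<bar> + 1)^2 \<le> 0"
      by (simp add: mult_nonpos_nonneg)
    also have "(2*t*a + t^2*b) * (\<bar>b\<bar> + 1)^2 = a^2 * (2*(\<bar>b\<bar>+1) + b)"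
    proof -
      have tc: "t * (\<bar>b\<bar> + 1) = a" unfolding t_def by simp
      have "(2*t*a + t^2*b) * (\<bar>b\<bar> + 1)^2 = 2*a*(t*(\<bar>b\<bar> + 1))*(\<bar>b\<bar> + 1) + (t*(\<bar>b\<bar> + 1))^2*b"
        by (simp add: algebra_simps power2_eq_square)
      then show ?thesis unfolding tc by (simp add: algebra_simps power2_eq_square)
    qed
    finally have "a^2 * (2*(\<bar>b\<bar>+1) + b) \<le> 0" .
    moreover have "0 < 2*(\<bar>b\<bar>+1) + b" by (cases "b \<ge> 0") auto
    ultimately have "a^2 \<le> 0" by (simp add: mult_le_0_iff)
    then have "a = 0" by simp
    then show ?thesis unfolding a_def by simp
  qed
  obtain y0 where y0: "y0 \<in> U" "C *v x = S *v y0" using inv[OF xU] by blast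
  define u where "u = y0 - l *\<^sub>R x"
  have uU: "u \<in> U" unfolding u_def using U y0 xU by (simp add: subspace_diff subspace_scale)
  have Su: "S *v u = C *v x - l *\<^sub>R (S *v x)"
    unfolding u_def using y0 by (simp add: matrix_vector_mult_diff_distrib matrix_vector_mult_scaleR)
  have symS: "transpose S = S" using spd unfolding spd_def by blast
  have "u \<bullet> (S *v u) = u \<bullet> (C *v x) - l * (u \<bullet> (S *v x))"
    unfolding Su by (simp add: inner_diff_right)
  also have "\<dots> = x \<bullet> (C *v u) - l * (x \<bullet> (S *v u))"
    using sym_inner[OF symC, of u x] sym_inner[OF symS, of u x] by simp
  also have "\<dots> = 0" using stat[OF uU] by simp
  finally have "u = 0" using spd_pos[OF spd, of u] by force
  then have "C *v x = l *\<^sub>R (S *v x)" using Su by simp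
  then show ?thesis using xU xnz l0 bound by blast
qed

lemma eig_family:
  fixes C S :: "real^'n^'n"
  assumes symC: "transpose C = C" and psd: "\<And>x. 0 \<le> x \<bullet> (C *v x)" and spd: "spd S"
  shows "subspace U \<Longrightarrow> (\<forall>x\<in>U. \<exists>y\<in>U. C *v x = S *v y) \<Longrightarrow> m \<le> dim U \<Longrightarrow>
    \<exists>w \<delta>. (\<forall>k<m. w k \<in> U \<and> w k \<noteq> 0 \<and> C *v w k = \<delta> k *\<^sub>R (S *v w k) \<and> 0 \<le> \<delta> k) \<and>
          (\<forall>k<m. \<forall>l<m. k \<noteq> l \<longrightarrow> w k \<bullet> (S *v w l) = 0) \<and>
          (\<forall>k l. k \<le> l \<and> l < m \<longrightarrow> \<delta> l \<le> \<delta> k)"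
proof (induction m arbitrary: U)
  case 0
  then show ?case by auto
next
  case (Suc d)
  have U: "subspace U" and inv: "\<And>x. x \<in> U \<Longrightarrow> \<exists>y\<in>U. C *v x = S *v y"
    and dimU: "Suc d \<le> dim U" using Suc.prems by auto
  have symS: "transpose S = S" using spd unfolding spd_def by blast
  obtain x0 where x0: "x0 \<in> U" "x0 \<noteq> 0"
  proof -
    have "\<not> U \<subseteq> {0}"
    proof
      assume "U \<subseteq> {0}"
      then have "U \<subseteq> span {}" by simp
      then have "dim U \<le> dim ({}::(real^'n) set)" by (rule dim_mono)
      moreover have "dim ({}::(real^'n) set) = 0" by simp
      ultimately show False using dimU by linarith
    qed
    then show ?thesis using that by blast
  qed
  obtain x l where xU: "x \<in> U" and xnz: "x \<noteq> 0" and eig: "C *v x = l *\<^sub>R (S *v x)" and l0: "0 \<le> l"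
    and bound: "\<And>y. y \<in> U \<Longrightarrow> y \<bullet> (C *v y) \<le> l * (y \<bullet> (S *v y))"
    using rayleigh_eig[OF symC psd spd U inv x0] by blast
  define a where "a = S *v x"
  have ax: "0 < a \<bullet> x" unfolding a_def using spd_pos[OF spd xnz] by (simp add: inner_commute)
  define U' where "U' = U \<inter> {y. a \<bullet> y = 0}"
  have U'sub: "subspace U'" unfolding U'_def by (rule subspace_inter[OF U subspace_hyperplane])
  have "U \<subseteq> span (insert x U')"
  proof
    fix y assume yU: "y \<in> U"
    define c where "c = (a \<bullet> y) / (a \<bullet> x)"
    have "y - c *\<^sub>R x \<in> U'" unfolding U'_def using yU xU U ax
      by (auto simp: subspace_diff subspace_scale c_def inner_diff_right)
    then have "y - c *\<^sub>R x \<in> span (insert x U')" by (simp add: span_base)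
    moreover have "c *\<^sub>R x \<in> span (insert x U')" by (simp add: span_base span_mul)
    ultimately have "(y - c *\<^sub>R x) + c *\<^sub>R x \<in> span (insert x U')" by (rule span_add)
    then show "y \<in> span (insert x U')" by simp
  qed
  then have "dim U \<le> dim (insert x U')" by (rule dim_mono)
  also have "\<dots> \<le> dim U' + 1" by (simp add: dim_insert)
  finally have dU': "d \<le> dim U'" using dimU by simp
  have inv': "\<forall>y\<in>U'. \<exists>z\<in>U'. C *v y = S *v z"
  proof
    fix y assume yU': "y \<in> U'"
    then have yU: "y \<in> U" and ay: "a \<bullet> y = 0" unfolding U'_def by auto
    obtain z where zU: "z \<in> U" and z: "C *v y = S *v z" using inv[OF yU] by blast
    have "a \<bullet> z = x \<bullet> (S *v z)" unfolding a_def using sym_inner[OF symS, of z x] by (simp add: inner_commute)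
    also have "\<dots> = x \<bullet> (C *v y)" using z by simp
    also have "\<dots> = y \<bullet> (C *v x)" by (rule sym_inner[OF symC])
    also have "\<dots> = l * (a \<bullet> y)" unfolding eig a_def by (simp add: inner_commute)
    finally have "a \<bullet> z = 0" using ay by simp
    then show "\<exists>z\<in>U'. C *v y = S *v z" using zU z unfolding U'_def by blast
  qed
  obtain w' \<delta>' where
    w'1: "\<forall>k<d. w' k \<in> U' \<and> w' k \<noteq> 0 \<and> C *v w' k = \<delta>' k *\<^sub>R (S *v w' k) \<and> 0 \<le> \<delta>' k" and
    w'2: "\<forall>k<d. \<forall>l<d. k \<noteq> l \<longrightarrow> w' k \<bullet> (S *v w' l) = 0" and
    w'3: "\<forall>k l. k \<le> l \<and> l < d \<longrightarrow> \<delta>' l \<le> \<delta>' k"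
    using Suc.IH[OF U'sub inv' dU'] by blast
  have orth1: "x \<bullet> (S *v w' k) = 0" "w' k \<bullet> (S *v x) = 0" if "k < d" for k
  proof -
    have "a \<bullet> w' k = 0" using w'1 that unfolding U'_def by auto
    then show "w' k \<bullet> (S *v x) = 0" unfolding a_def by (simp add: inner_commute)
    then show "x \<bullet> (S *v w' k) = 0" using sym_inner[OF symS, of x "w' k"] by simp
  qed
  have le: "\<delta>' k \<le> l" if "k < d" for k
  proof -
    have wU: "w' k \<in> U" using w'1 that unfolding U'_def by auto
    have p: "0 < w' k \<bullet> (S *v w' k)" using spd_pos[OF spd] w'1 that by blast
    have "\<delta>' k * (w' k \<bullet> (S *v w' k)) \<le> l * (w' k \<bullet> (S *v w' k))"
      using bound[OF wU] w'1 that by simp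
    then show ?thesis using p by simp
  qed
  define w where "w k = (if k = 0 then x else w' (k - 1))" for k
  define \<delta> where "\<delta> k = (if k = 0 then l else \<delta>' (k - 1))" for k
  have P1: "\<forall>k<Suc d. w k \<in> U \<and> w k \<noteq> 0 \<and> C *v w k = \<delta> k *\<^sub>R (S *v w k) \<and> 0 \<le> \<delta> k"
  proof (intro allI impI)
    fix k assume k: "k < Suc d"
    show "w k \<in> U \<and> w k \<noteq> 0 \<and> C *v w k = \<delta> k *\<^sub>R (S *v w k) \<and> 0 \<le> \<delta> k"
    proof (cases "k = 0")
      case True then show ?thesis using xU xnz eig l0 unfolding w_def \<delta>_def by simp
    next
      case False then show ?thesis using w'1 k unfolding w_def \<delta>_def U'_def by auto
    qed
  qed
  have P2: "\<forall>k<Suc d. \<forall>l<Suc d. k \<noteq> l \<longrightarrow> w k \<bullet> (S *v w l) = 0"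
  proof (intro allI impI)
    fix k j assume k: "k < Suc d" and j: "j < Suc d" and kj: "k \<noteq> j"
    show "w k \<bullet> (S *v w j) = 0"
    proof (cases "k = 0")
      case True then show ?thesis using kj j orth1 unfolding w_def by auto
    next
      case False
      show ?thesis
      proof (cases "j = 0")
        case True then show ?thesis using False k orth1 unfolding w_def by auto
      next
        case False2: False
        then show ?thesis using False k j kj w'2 unfolding w_def by auto
      qed
    qed
  qed
  have P3: "\<forall>k j. k \<le> j \<and> j < Suc d \<longrightarrow> \<delta> j \<le> \<delta> k"
  proof (intro allI impI)
    fix k j assume kj: "k \<le> j \<and> j < Suc d"
    show "\<delta> j \<le> \<delta> k"
    proof (cases "k = 0")
      case True then show ?thesis using kj le unfolding \<delta>_def by auto
    next
      case False
      show ?thesis proof -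
        have "k - 1 \<le> j - 1 \<and> j - 1 < d" using kj False by auto
        then show ?thesis using w'3 kj False unfolding \<delta>_def by auto
      qed
    qed
  qed
  show ?case using P1 P2 P3 by blast
qed



lemma emp_cov_comp:
  "emp_cov J v $ a $ b = (1 / (real J - 1)) * (\<Sum>j\<in>{1..J}. (v j - ens_mean J v) $ a * (v j - ens_mean J v) $ b)"
  by (simp add: emp_cov_def outer_prod_def sum_component)

lemma emp_cov_sym: "transpose (emp_cov J v) = emp_cov J v"
  by (simp add: vec_eq_iff transpose_def emp_cov_comp mult.commute)

lemma emp_cov_mult:
  "emp_cov J v *v y = (1 / (real J - 1)) *\<^sub>R (\<Sum>j\<in>{1..J}. ((v j - ens_mean J v) \<bullet> y) *\<^sub>R (v j - ens_mean J v))"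
proof -
  define u where "u j = v j - ens_mean J v" for j
  define c where "c = 1 / (real J - 1)"
  have "(emp_cov J v *v y) $ a = (c *\<^sub>R (\<Sum>j\<in>{1..J}. (u j \<bullet> y) *\<^sub>R u j)) $ a" for a
  proof -
    have "(emp_cov J v *v y) $ a = (\<Sum>k\<in>UNIV. (c * (\<Sum>j\<in>{1..J}. u j $ a * u j $ k)) * y $ k)"
      by (simp add: matrix_vector_mult_def emp_cov_comp u_def c_def)
    also have "\<dots> = (\<Sum>k\<in>UNIV. (\<Sum>j\<in>{1..J}. c * (u j $ a * u j $ k * y $ k)))"
      by (simp add: sum_distrib_left sum_distrib_right mult.assoc)
    also have "\<dots> = (\<Sum>j\<in>{1..J}. (\<Sum>k\<in>UNIV. c * (u j $ a * u j $ k * y $ k)))"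
      by (rule sum.swap)
    also have "\<dots> = (\<Sum>j\<in>{1..J}. c * ((\<Sum>k\<in>UNIV. u j $ k * y $ k) * u j $ a))"
      by (simp add: sum_distrib_left sum_distrib_right mult_ac)
    also have "\<dots> = (c *\<^sub>R (\<Sum>j\<in>{1..J}. (u j \<bullet> y) *\<^sub>R u j)) $ a"
      by (simp add: inner_vec_def sum_component sum_distrib_left)
    finally show ?thesis .
  qed
  then show ?thesis unfolding u_def c_def by (simp add: vec_eq_iff)
qed

lemma emp_cov_psd:
  assumes "2 \<le> J"
  shows "0 \<le> y \<bullet> (emp_cov J v *v y)"
proof -
  have "y \<bullet> (emp_cov J v *v y) = (1 / (real J - 1)) * (\<Sum>j\<in>{1..J}. ((v j - ens_mean J v) \<bullet> y)^2)"
    unfolding emp_cov_mult by (simp add: inner_sum_right power2_eq_square inner_commute)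
  moreover have "0 < real J - 1" using assms by simp
  ultimately show ?thesis by (simp add: sum_nonneg)
qed

lemma inner_mat: "x \<bullet> ((M::real^'m^'n) *v z) = (transpose M *v x) \<bullet> z"
  by (simp add: dot_lmul_matrix[symmetric])

lemma f_mono:
  fixes x y c :: real
  assumes "0 \<le> x" "x \<le> y" "0 \<le> c"
  shows "x / (1 + c * x) \<le> y / (1 + c * y)"
proof -
  have p1: "0 < 1 + c * x" "0 < 1 + c*y" using assms by (simp_all add: add_pos_nonneg)
  have "x * (1 + c*y) \<le> y * (1 + c*x)" using assms by (simp add: algebra_simps)
  then show ?thesis using p1 by (simp add: divide_simps)
qed

lemma f_step:
  fixes x :: real and i :: nat
  assumes "0 \<le> x"
  shows "x / (1 + real (Suc i) * x) = (x / (1 + real i * x)) / (1 + x / (1 + real i * x))"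
proof -
  have p: "0 < 1 + real i * x" using assms by (simp add: add_pos_nonneg)
  have p2: "0 < 1 + real i * x + x" using assms p by simp
  define a where "a = 1 + real i * x"
  have a: "0 < a" using p unfolding a_def .
  have e1: "1 + real (Suc i) * x = a + x" unfolding a_def by (simp add: algebra_simps)
  have e2: "1 + x / a = (a + x) / a" using a by (simp add: field_simps)
  show ?thesis unfolding a_def[symmetric] e1 e2 using a by simp
qed

lemma down_card:
  fixes S :: "nat set"
  assumes "S \<subseteq> {..<n}" "\<And>l k. l \<in> S \<Longrightarrow> k \<le> l \<Longrightarrow> k \<in> S"
  shows "l \<in> S \<longleftrightarrow> l < card S"
proof
  have fin: "finite S" using assms(1) finite_subset by blast
  assume "l \<in> S"
  then have "{..l} \<subseteq> S" using assms(2) by auto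
  then have "card {..l} \<le> card S" using fin card_mono by blast
  then show "l < card S" by simp
next
  have fin: "finite S" using assms(1) finite_subset by blast
  assume lt: "l < card S"
  show "l \<in> S"
  proof (rule ccontr)
    assume "l \<notin> S"
    then have "S \<subseteq> {..<l}" using assms(2) by (auto simp: not_less[symmetric])
    then have "card S \<le> card {..<l}" by (rule card_mono[OF finite_lessThan])
    then have "card S \<le> l" by simp
    then show False using lt by simp
  qed
qed

lemma step_eig:
  fixes Ci S :: "real^'n^'n"
  assumes inv: "invertible (Ci + S)" and e: "Ci *v x = d *\<^sub>R (S *v x)" and d: "0 \<le> d"
  shows "(S - S ** matrix_inv (Ci + S) ** S) *v x = (d / (1 + d)) *\<^sub>R (S *v x)"
proof -
  define M where "M = matrix_inv (Ci + S)"
  have "(Ci + S) *v x = (1 + d) *\<^sub>R (S *v x)"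
    using e by (simp add: matrix_vector_mult_add_rdistrib algebra_simps)
  then have "M *v ((1 + d) *\<^sub>R (S *v x)) = x" using inv_apply(2)[OF inv, of x] unfolding M_def by simp
  then have h: "(1 + d) *\<^sub>R (M *v (S *v x)) = x" by (simp add: matrix_vector_mult_scaleR)
  have MS: "M *v (S *v x) = (1 / (1 + d)) *\<^sub>R x"
  proof -
    have "(1/(1+d)) *\<^sub>R ((1+d) *\<^sub>R (M *v (S *v x))) = M *v (S *v x)" using d by simp
    then show ?thesis using h by simp
  qed
  have "(S - S ** M ** S) *v x = S *v x - S *v (M *v (S *v x))"
    by (simp add: matrix_vector_mult_diff_rdistrib matrix_vector_mul_assoc matrix_mul_assoc)
  also have "\<dots> = S *v x - (1 / (1 + d)) *\<^sub>R (S *v x)" unfolding MS by (simp add: matrix_vector_mult_scaleR)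
  also have "\<dots> = (d / (1 + d)) *\<^sub>R (S *v x)"
  proof -
    have "1 - 1 / (1 + d) = d / (1 + d)" using d by (simp add: field_simps)
    then show ?thesis by (metis scaleR_diff_left scaleR_one)
  qed
  finally show ?thesis unfolding M_def .
qed



lemma invert_from_basis:
  fixes Ci S :: "real^'n^'n"
  assumes spd: "spd S" and sp: "span (W ` I) = UNIV"
    and e: "\<And>l. l \<in> I \<Longrightarrow> Ci *v W l = d l *\<^sub>R (S *v W l) \<and> 0 \<le> d l"
  shows "invertible (Ci + S)"
proof -
  define R where "R = range (\<lambda>x. (Ci + S) *v x)"
  have subR: "subspace R" unfolding R_def subspace_def
  proof (intro conjI ballI allI)
    show "0 \<in> range ((*v) (Ci + S))" by (metis matrix_vector_mult_0_right rangeI)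
    fix x y assume "x \<in> range ((*v) (Ci + S))" "y \<in> range ((*v) (Ci + S))"
    then obtain a b where "x = (Ci + S) *v a" "y = (Ci + S) *v b" by blast
    then show "x + y \<in> range ((*v) (Ci + S))"
      by (metis matrix_vector_right_distrib rangeI)
  next
    fix c x assume "x \<in> range ((*v) (Ci + S))"
    then obtain a where "x = (Ci + S) *v a" by blast
    then show "c *\<^sub>R x \<in> range ((*v) (Ci + S))"
      by (metis matrix_vector_mult_scaleR rangeI)
  qed
  have "S *v W l \<in> R" if l: "l \<in> I" for l
  proof -
    have d: "0 \<le> d l" and el: "Ci *v W l = d l *\<^sub>R (S *v W l)" using e[OF l] by auto
    have "(Ci + S) *v ((1 / (1 + d l)) *\<^sub>R W l) = (1 / (1 + d l)) *\<^sub>R ((1 + d l) *\<^sub>R (S *v W l))"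
      by (simp add: matrix_vector_mult_scaleR matrix_vector_mult_add_rdistrib el algebra_simps)
    also have "\<dots> = S *v W l" using d by simp
    finally show ?thesis unfolding R_def by (metis rangeI)
  qed
  then have "(\<lambda>x. S *v x) ` (W ` I) \<subseteq> R" by auto
  then have "span ((\<lambda>x. S *v x) ` (W ` I)) \<subseteq> R" using span_minimal subR by blast
  moreover have "span ((\<lambda>x. S *v x) ` (W ` I)) = (\<lambda>x. S *v x) ` UNIV"
    using span_linear_image[OF matrix_vector_mul_linear, of S "W ` I"] sp by simp
  moreover have "(\<lambda>x. S *v x) ` UNIV = UNIV"
    using inv_apply(1)[OF spd_invertible[OF spd]] by (metis surj_def)
  ultimately have "surj (\<lambda>x. (Ci + S) *v x)" unfolding R_def by auto
  then show ?thesis using matrix_right_invertible_surjective invertible_right_inverse by blast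
qed



theorem proposition4p3:
  fixes H :: "real^'d^'n" and Sigma :: "real^'n^'n"
    and J :: nat and v :: "nat \<Rightarrow> real^'d"
    and C :: "nat \<Rightarrow> real^'n^'n" and h :: nat
  assumes rankH: "rank H = h"
    and spd: "spd Sigma"
    and J: "2 \<le> J"
    and C0: "C 0 = H ** emp_cov J v ** transpose H"
    and Csuc: "\<And>i. C (Suc i) = Sigma - Sigma ** matrix_inv (C i + Sigma) ** Sigma"
  shows
    "(\<forall>(w::real^'n) d0. w \<noteq> 0 \<and> C 0 *v w = d0 *\<^sub>R (Sigma *v w) \<longrightarrow>
        (\<forall>i. \<exists>d. C i *v w = d *\<^sub>R (Sigma *v w) \<and>
                 (d0 = 0 \<longrightarrow> d = 0) \<and> (0 < d0 \<longrightarrow> 0 < d)))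
     \<and>
     (\<exists>(w::nat \<Rightarrow> real^'n) (\<delta>::nat \<Rightarrow> nat \<Rightarrow> real).
        let r = card {l. l < CARD('n) \<and> 0 < \<delta> l 0} in
        (\<forall>l<CARD('n). w l \<noteq> 0) \<and>
        inj_on w {..<CARD('n)} \<and>
        independent (w ` {..<CARD('n)}) \<and>
        span (w ` {..<CARD('n)}) = UNIV \<and>
        (\<forall>k<CARD('n). \<forall>l<CARD('n). k \<noteq> l \<longrightarrow> w k \<bullet> (Sigma *v w l) = 0) \<and>
        (\<forall>l<CARD('n). \<forall>i. C i *v w l = \<delta> l i *\<^sub>R (Sigma *v w l)) \<and>
        (\<forall>l<r. w l \<in> range (\<lambda>x. matrix_inv Sigma *v (H *v x)) \<and> (\<forall>i. 0 < \<delta> l i)) \<and>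
        (\<forall>i\<ge>1. \<forall>k l. k \<le> l \<and> l < r \<longrightarrow> \<delta> l i \<le> \<delta> k i) \<and>
        (\<forall>l. r \<le> l \<and> l < h \<longrightarrow>
             w l \<in> range (\<lambda>x. matrix_inv Sigma *v (H *v x)) \<and> (\<forall>i. \<delta> l i = 0)) \<and>
        (\<forall>l. h \<le> l \<and> l < CARD('n) \<longrightarrow>
             transpose H *v w l = 0 \<and> (\<forall>i. \<delta> l i = 0)))"
proof -
  define n where "n = CARD('n)"
  define G where "G = emp_cov J v"
  have symS: "transpose Sigma = Sigma" using spd unfolding spd_def by blast
  have invS: "invertible Sigma" by (rule spd_invertible[OF spd])
  have C0app: "C 0 *v x = H *v (G *v (transpose H *v x))" for x
    by (simp only: C0 G_def matrix_vector_mul_assoc matrix_mul_assoc)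
  have symC0: "transpose (C 0) = C 0"
    by (simp add: C0 matrix_transpose_mul emp_cov_sym matrix_mul_assoc)
  have psd0: "0 \<le> x \<bullet> (C 0 *v x)" for x
    unfolding C0app inner_mat[of x H] G_def by (rule emp_cov_psd[OF J])
  define V where "V = range (\<lambda>x. matrix_inv Sigma *v (H *v x))"
  define K where "K = {y. transpose H *v y = (0::real^'d)}"
  have subV: "subspace V" unfolding V_def subspace_def
  proof (intro conjI ballI allI)
    show "0 \<in> range (\<lambda>x. matrix_inv Sigma *v (H *v x))"
      by (metis matrix_vector_mult_0_right rangeI)
    fix x y assume "x \<in> range (\<lambda>x. matrix_inv Sigma *v (H *v x))" "y \<in> range (\<lambda>x. matrix_inv Sigma *v (H *v x))"
    then obtain a b where "x = matrix_inv Sigma *v (H *v a)" "y = matrix_inv Sigma *v (H *v b)" by blast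
    then show "x + y \<in> range (\<lambda>x. matrix_inv Sigma *v (H *v x))"
      by (metis matrix_vector_right_distrib rangeI)
  next
    fix c x assume "x \<in> range (\<lambda>x. matrix_inv Sigma *v (H *v x))"
    then obtain a where "x = matrix_inv Sigma *v (H *v a)" by blast
    then show "c *\<^sub>R x \<in> range (\<lambda>x. matrix_inv Sigma *v (H *v x))"
      by (metis matrix_vector_mult_scaleR rangeI)
  qed
  have subK: "subspace K" unfolding K_def subspace_def
    by (simp add: matrix_vector_right_distrib matrix_vector_mult_scaleR del: transpose_matrix_vector)
  have subRH: "subspace (range (\<lambda>x. H *v x))" unfolding subspace_def
  proof (intro conjI ballI allI)
    show "0 \<in> range (\<lambda>x. H *v x)" by (metis matrix_vector_mult_0_right rangeI)
    fix x y assume "x \<in> range (\<lambda>x. H *v x)" "y \<in> range (\<lambda>x. H *v x)"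
    then obtain a b where "x = H *v a" "y = H *v b" by blast
    then show "x + y \<in> range (\<lambda>x. H *v x)" by (metis matrix_vector_right_distrib rangeI)
  next
    fix c x assume "x \<in> range (\<lambda>x. H *v x)"
    then obtain a where "x = H *v a" by blast
    then show "c *\<^sub>R x \<in> range (\<lambda>x. H *v x)" by (metis matrix_vector_mult_scaleR rangeI)
  qed
  have invV: "\<forall>x\<in>V. \<exists>y\<in>V. C 0 *v x = Sigma *v y"
  proof
    fix x assume "x \<in> V"
    define y where "y = matrix_inv Sigma *v (H *v (G *v (transpose H *v x)))"
    have "y \<in> V" unfolding V_def y_def by blast
    moreover have "C 0 *v x = Sigma *v y" unfolding y_def inv_apply(1)[OF invS] C0app ..
    ultimately show "\<exists>y\<in>V. C 0 *v x = Sigma *v y" by blast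
  qed
  have invK: "\<forall>x\<in>K. \<exists>y\<in>K. C 0 *v x = Sigma *v y"
  proof
    fix x assume "x \<in> K"
    then have "C 0 *v x = Sigma *v 0" unfolding C0app K_def by simp
    moreover have "0 \<in> K" unfolding K_def by simp
    ultimately show "\<exists>y\<in>K. C 0 *v x = Sigma *v y" by blast
  qed
  have dRH: "dim (range (\<lambda>x. H *v x)) = h" using rankH rank_dim_range by metis
  have Kset: "{y \<in> UNIV. \<forall>x \<in> range (\<lambda>x. H *v x). orthogonal x y} = K"
  proof (rule set_eqI, rule iffI)
    fix y assume "y \<in> {y \<in> UNIV. \<forall>x \<in> range (\<lambda>x. H *v x). orthogonal x y}"
    then have "orthogonal (H *v (transpose H *v y)) y" by blast
    then have "(transpose H *v y) \<bullet> (transpose H *v y) = 0"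
      unfolding orthogonal_def using inner_mat[of y H "transpose H *v y"] by (simp add: inner_commute)
    then show "y \<in> K" unfolding K_def by simp
  next
    fix y assume "y \<in> K"
    then show "y \<in> {y \<in> UNIV. \<forall>x \<in> range (\<lambda>x. H *v x). orthogonal x y}"
      unfolding K_def orthogonal_def using inner_mat[of y H] by (auto simp: inner_commute)
  qed
  have dK: "dim K + h = n"
    using dim_subspace_orthogonal_to_vectors[OF subRH subspace_UNIV] unfolding Kset dRH n_def by simp
  have dV: "h \<le> dim V"
  proof -
    have "range (\<lambda>x. H *v x) \<subseteq> (\<lambda>x. Sigma *v x) ` V"
      unfolding V_def using inv_apply(1)[OF invS] by (auto simp: image_iff)
    then have "h \<le> dim ((\<lambda>x. Sigma *v x) ` V)" using dRH dim_subset by metis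
    also have "\<dots> \<le> dim V" by (rule dim_image_le[OF matrix_vector_mul_linear])
    finally show ?thesis .
  qed
  obtain wV \<delta>V where
    V1: "\<forall>k<h. wV k \<in> V \<and> wV k \<noteq> 0 \<and> C 0 *v wV k = \<delta>V k *\<^sub>R (Sigma *v wV k) \<and> 0 \<le> \<delta>V k" and
    V2: "\<forall>k<h. \<forall>l<h. k \<noteq> l \<longrightarrow> wV k \<bullet> (Sigma *v wV l) = 0" and
    V3: "\<forall>k l. k \<le> l \<and> l < h \<longrightarrow> \<delta>V l \<le> \<delta>V k"
    using eig_family[OF symC0 psd0 spd subV invV dV] by blast
  obtain wK \<delta>K where
    K1: "\<forall>k<n-h. wK k \<in> K \<and> wK k \<noteq> 0 \<and> C 0 *v wK k = \<delta>K k *\<^sub>R (Sigma *v wK k) \<and> 0 \<le> \<delta>K k" and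
    K2: "\<forall>k<n-h. \<forall>l<n-h. k \<noteq> l \<longrightarrow> wK k \<bullet> (Sigma *v wK l) = 0"
    using eig_family[OF symC0 psd0 spd subK invK, of "n-h"] dK by auto
  have hn: "h \<le> n" using dK by simp
  have SigK: "C 0 *v y = 0 *\<^sub>R (Sigma *v y)" if "y \<in> K" for y
    using that unfolding C0app K_def by simp
  have cross: "a \<bullet> (Sigma *v b) = 0 \<and> b \<bullet> (Sigma *v a) = 0" if a: "a \<in> V" and b: "b \<in> K" for a b
  proof -
    obtain z where az: "a = matrix_inv Sigma *v (H *v z)" using a unfolding V_def by blast
    have "b \<bullet> (Sigma *v a) = b \<bullet> (H *v z)" unfolding az inv_apply(1)[OF invS] ..
    also have "\<dots> = 0" using b unfolding K_def inner_mat[of b H] by simp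
    finally have 1: "b \<bullet> (Sigma *v a) = 0" .
    then show ?thesis using sym_inner[OF symS, of a b] by simp
  qed
  define W where "W l = (if l < h then wV l else wK (l - h))" for l
  define d0 where "d0 l = (if l < h then \<delta>V l else 0)" for l
  define \<delta> where "\<delta> l i = d0 l / (1 + real i * d0 l)" for l i
  have WV: "W l \<in> V" if "l < h" for l using V1 that unfolding W_def by auto
  have WK: "W l \<in> K" if "h \<le> l" "l < n" for l using K1 that unfolding W_def by auto
  have Wnz: "W l \<noteq> 0" if "l < n" for l
    using V1 K1 that hn unfolding W_def by (cases "l < h") auto
  have d0nn: "0 \<le> d0 l" for l using V1 unfolding d0_def by auto
  have eig0: "C 0 *v W l = d0 l *\<^sub>R (Sigma *v W l)" if "l < n" for l
  proof (cases "l < h")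
    case True then show ?thesis using V1 unfolding W_def d0_def by auto
  next
    case False then show ?thesis using SigK[OF WK] that unfolding d0_def by auto
  qed
  have orth: "W k \<bullet> (Sigma *v W l) = 0" if "k < n" "l < n" "k \<noteq> l" for k l
  proof (cases "k < h")
    case True
    show ?thesis
    proof (cases "l < h")
      case True2: True
      then show ?thesis using True V2 that unfolding W_def by auto
    next
      case False
      then show ?thesis using cross[OF WV[OF True] WK[of l]] that by auto
    qed
  next
    case False
    show ?thesis
    proof (cases "l < h")
      case True2: True
      then show ?thesis using cross[OF WV[OF True2] WK[of k]] that False by auto
    next
      case False2: False
      have "k - h < n - h" "l - h < n - h" "k - h \<noteq> l - h" using that False False2 by auto
      then show ?thesis using K2 False False2 unfolding W_def by auto
    qed
  qed
  have injW: "inj_on W {..<n}"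
  proof (rule inj_onI)
    fix k l assume k: "k \<in> {..<n}" and l: "l \<in> {..<n}" and eq: "W k = W l"
    show "k = l"
    proof (rule ccontr)
      assume "k \<noteq> l"
      then have "W k \<bullet> (Sigma *v W k) = 0" using orth[of k l] k l eq by auto
      moreover have "0 < W k \<bullet> (Sigma *v W k)" using spd_pos[OF spd Wnz[of k]] k by auto
      ultimately show False by simp
    qed
  qed
  have indep: "independent (W ` {..<n})"
  proof (rule orth_indep[OF spd])
    show "finite (W ` {..<n})" by simp
    show "0 \<notin> W ` {..<n}" using Wnz by auto
    fix a b assume "a \<in> W ` {..<n}" "b \<in> W ` {..<n}" "a \<noteq> b"
    then show "a \<bullet> (Sigma *v b) = 0" using orth by auto
  qed
  have spanW: "span (W ` {..<n}) = UNIV"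
  proof -
    have "card (W ` {..<n}) = n" using card_image[OF injW] by simp
    then have "card (W ` {..<n}) = dim (UNIV :: (real^'n) set)" unfolding n_def by simp
    then have "UNIV \<subseteq> span (W ` {..<n})" using card_eq_dim[of "W ` {..<n}" UNIV] indep by simp
    then show ?thesis by auto
  qed
  have eigall: "\<forall>l<n. C i *v W l = \<delta> l i *\<^sub>R (Sigma *v W l)" for i
  proof (induction i)
    case 0
    then show ?case using eig0 unfolding \<delta>_def by simp
  next
    case (Suc i)
    have dnn: "0 \<le> \<delta> l i" for l unfolding \<delta>_def using d0nn[of l] by simp
    have inv: "invertible (C i + Sigma)"
      by (rule invert_from_basis[OF spd spanW, of _ "\<lambda>l. \<delta> l i"]) (use Suc.IH dnn in auto)
    show ?case
    proof (intro allI impI)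
      fix l assume l: "l < n"
      have "C (Suc i) *v W l = (\<delta> l i / (1 + \<delta> l i)) *\<^sub>R (Sigma *v W l)"
        unfolding Csuc by (rule step_eig[OF inv]) (use Suc.IH l dnn in auto)
      also have "\<delta> l i / (1 + \<delta> l i) = \<delta> l (Suc i)"
        unfolding \<delta>_def by (rule f_step[OF d0nn, symmetric])
      finally show "C (Suc i) *v W l = \<delta> l (Suc i) *\<^sub>R (Sigma *v W l)" .
    qed
  qed
  have invall: "invertible (C i + Sigma)" for i
  proof -
    have dnn: "0 \<le> \<delta> l i" for l unfolding \<delta>_def using d0nn[of l] by simp
    show ?thesis
      by (rule invert_from_basis[OF spd spanW, of _ "\<lambda>l. \<delta> l i"]) (use eigall dnn in auto)
  qed
  have part1: "\<forall>(w::real^'n) e0. w \<noteq> 0 \<and> C 0 *v w = e0 *\<^sub>R (Sigma *v w) \<longrightarrow>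
        (\<forall>i. \<exists>d. C i *v w = d *\<^sub>R (Sigma *v w) \<and> (e0 = 0 \<longrightarrow> d = 0) \<and> (0 < e0 \<longrightarrow> 0 < d))"
  proof (intro allI impI)
    fix w :: "real^'n" and e0 i
    assume a: "w \<noteq> 0 \<and> C 0 *v w = e0 *\<^sub>R (Sigma *v w)"
    have pw: "0 < w \<bullet> (Sigma *v w)" using spd_pos[OF spd] a by blast
    have "0 \<le> w \<bullet> (C 0 *v w)" by (rule psd0)
    then have "0 \<le> e0 * (w \<bullet> (Sigma *v w))" using a by simp
    then have e0: "0 \<le> e0" using pw by (simp add: zero_le_mult_iff)
    have it: "C j *v w = (e0 / (1 + real j * e0)) *\<^sub>R (Sigma *v w)" for j
    proof (induction j)
      case 0 then show ?case using a by simp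
    next
      case (Suc j)
      have "C (Suc j) *v w = ((e0 / (1 + real j * e0)) / (1 + e0 / (1 + real j * e0))) *\<^sub>R (Sigma *v w)"
        unfolding Csuc by (rule step_eig[OF invall Suc.IH]) (use e0 in simp)
      then show ?case unfolding f_step[OF e0, of j] .
    qed
    have pos: "0 < 1 + real i * e0" using e0 by (simp add: add_pos_nonneg)
    show "\<exists>d. C i *v w = d *\<^sub>R (Sigma *v w) \<and> (e0 = 0 \<longrightarrow> d = 0) \<and> (0 < e0 \<longrightarrow> 0 < d)"
      using it[of i] pos by (intro exI[of _ "e0 / (1 + real i * e0)"]) auto
  qed
  define Sp where "Sp = {l. l < n \<and> 0 < \<delta> l 0}"
  have Spd: "Sp = {l. l < n \<and> 0 < d0 l}" unfolding Sp_def \<delta>_def by simp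
  have d0h: "l < h" if "0 < d0 l" for l using that unfolding d0_def by (cases "l < h") auto
  have down: "k \<in> Sp" if "l \<in> Sp" "k \<le> l" for l k
  proof -
    have "l < h" "0 < d0 l" using that d0h unfolding Spd by auto
    then have "k < h" "0 < \<delta>V l" "\<delta>V l \<le> \<delta>V k" using V3 that unfolding d0_def by auto
    then show ?thesis using hn unfolding Spd d0_def by auto
  qed
  define r where "r = card Sp"
  have rchar: "l \<in> Sp \<longleftrightarrow> l < r" for l
    unfolding r_def by (rule down_card[of Sp n, OF _ down]) (auto simp: Sp_def)
  have rn: "r \<le> n" 
  proof -
    have "Sp \<subseteq> {..<n}" by (auto simp: Sp_def)
    then have "card Sp \<le> card {..<n}" by (rule card_mono[OF finite_lessThan])
    then show ?thesis unfolding r_def by simp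
  qed
  have rpos: "l < n \<and> 0 < d0 l" if "l < r" for l using rchar[of l] that unfolding Spd by auto
  have rzero: "d0 l = 0" if "r \<le> l" for l
  proof (cases "l < n")
    case True
    then have "\<not> 0 < d0 l" using rchar[of l] that unfolding Spd by auto
    then show ?thesis using d0nn[of l] by simp
  next
    case False then show ?thesis using hn unfolding d0_def by auto
  qed
  have part2: "
        (\<forall>l<n. W l \<noteq> 0) \<and>
        inj_on W {..<n} \<and>
        independent (W ` {..<n}) \<and>
        span (W ` {..<n}) = UNIV \<and>
        (\<forall>k<n. \<forall>l<n. k \<noteq> l \<longrightarrow> W k \<bullet> (Sigma *v W l) = 0) \<and>
        (\<forall>l<n. \<forall>i. C i *v W l = \<delta> l i *\<^sub>R (Sigma *v W l)) \<and>
        (\<forall>l<r. W l \<in> range (\<lambda>x. matrix_inv Sigma *v (H *v x)) \<and> (\<forall>i. 0 < \<delta> l i)) \<and>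
        (\<forall>i\<ge>1. \<forall>k l. k \<le> l \<and> l < r \<longrightarrow> \<delta> l i \<le> \<delta> k i) \<and>
        (\<forall>l. r \<le> l \<and> l < h \<longrightarrow>
             W l \<in> range (\<lambda>x. matrix_inv Sigma *v (H *v x)) \<and> (\<forall>i. \<delta> l i = 0)) \<and>
        (\<forall>l. h \<le> l \<and> l < n \<longrightarrow>
             transpose H *v W l = 0 \<and> (\<forall>i. \<delta> l i = 0))"
  proof (intro conjI allI impI)
    show "\<And>l. l < n \<Longrightarrow> W l \<noteq> 0" by (rule Wnz)
    show "inj_on W {..<n}" by (rule injW)
    show "independent (W ` {..<n})" by (rule indep)
    show "span (W ` {..<n}) = UNIV" by (rule spanW)
    show "\<And>k l. k < n \<Longrightarrow> l < n \<Longrightarrow> k \<noteq> l \<Longrightarrow> W k \<bullet> (Sigma *v W l) = 0" by (rule orth)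
    show "\<And>l i. l < n \<Longrightarrow> C i *v W l = \<delta> l i *\<^sub>R (Sigma *v W l)" using eigall by blast
    fix l assume "l < r"
    then show "W l \<in> range (\<lambda>x. matrix_inv Sigma *v (H *v x))"
      using rpos d0h WV unfolding V_def by blast
  next
    fix l i :: nat assume "l < r"
    then have "0 < d0 l" using rpos by blast
    then show "0 < \<delta> l i" unfolding \<delta>_def by (simp add: add_pos_nonneg)
  next
    fix i k l :: nat assume i: "1 \<le> i" and kl: "k \<le> l \<and> l < r"
    have "l < h" "0 < d0 l" using rpos d0h kl by auto
    then have "d0 l \<le> d0 k" "0 \<le> d0 l" using V3 kl unfolding d0_def by auto
    then show "\<delta> l i \<le> \<delta> k i" unfolding \<delta>_def using f_mono[of "d0 l" "d0 k" "real i"] by simp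
  next
    fix l assume "r \<le> l \<and> l < h"
    then show "W l \<in> range (\<lambda>x. matrix_inv Sigma *v (H *v x))" using WV unfolding V_def by blast
  next
    fix l i :: nat assume "r \<le> l \<and> l < h"
    then show "\<delta> l i = 0" using rzero unfolding \<delta>_def by simp
  next
    fix l assume "h \<le> l \<and> l < n"
    then show "transpose H *v W l = 0" using WK unfolding K_def by blast
  next
    fix l i :: nat assume a: "h \<le> l \<and> l < n"
    then have "d0 l = 0" unfolding d0_def by simp
    then show "\<delta> l i = 0" unfolding \<delta>_def by simp
  qed
  show ?thesis
    apply (unfold Let_def n_def[symmetric])
    apply (rule conjI[OF part1])
    apply (rule exI[of _ W])
    apply (rule exI[of _ \<delta>])
    using part2 unfolding r_def Sp_def by assumption
qed

end
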